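(* For any two positive integers $l$ and $s$ with $l \geq 2$, there exists a hypergraph $\mathcal{F}$ (with $s < |e|$ for every hyperedge $e$ of $\mathcal{F}$) such that $$\chi\left({\rm KG}^2(\mathcal{F}, s)\right) = l \quad \text{and} \quad {\rm ecd}^2(\mathcal{F}, s) = l + s.$$
   Context: A hypergraph $\mathcal{F}$ consists of a finite vertex set $V(\mathcal{F})$ and a set $E(\mathcal{F}) \subseteq 2^{V(\mathcal{F})} \setminus \{\varnothing\}$ of hyperedges. For an integer $r \geq 2$ and a nonnegative integer $s$ with $s < |e|$ for every hyperedge $e$ of $\mathcal{F}$, the generalized Kneser hypergraph ${\rm KG}^r(\mathcal{F}, s)$ is the $r$-uniform hypergraph whose vertex set is $E(\mathcal{F})$, in which $r$ distinct hyperedges $e_1, \dots, e_r$ of $\mathcal{F}$ form a hyperedge whenever $|e_i \cap e_j| \leq s$ for all distinct $i, j \in \{1, \dots, r\}$. Its chromatic number $\chi$ is the minimum size of a set $C$ admitting a map $f : E(\mathcal{F}) \to C$ such that no hyperedge of ${\rm KG}^r(\mathcal{F}, s)$ is monochromatic (for $r = 2$ this is the ordinary chromatic number of the graph). For sets $A, B$ and a nonnegative integer $s$, write $A \subseteq_s B$ if $|A \setminus B| \leq s$. The $s$-th equitable $r$-colorability defect ${\rm ecd}^r(\mathcal{F}, s)$ is the minimum cardinality of a set $X_0 \subseteq V(\mathcal{F})$ for which there is a partition $\{X_1, \dots, X_r\}$ of $V(\mathcal{F}) \setminus X_0$ (parts may be empty) such that $\big||X_i| - |X_j|\big| \leq 1$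 for all $1 \leq i < j \leq r$, and $e \not\subseteq_s X_i$ for every hyperedge $e \in E(\mathcal{F})$ and every $i \in \{1, \dots, r\}$. *)

theory Defs
  imports Main
begin

definition hypergraph :: "'a set \<Rightarrow> 'a set set \<Rightarrow> bool" where
  "hypergraph V E \<longleftrightarrow> finite V \<and> E \<subseteq> Pow V - {{}}"

definition KG_edges :: "nat \<Rightarrow> 'a set set \<Rightarrow> nat \<Rightarrow> 'a set set set" where
  "KG_edges r E s = {S. S \<subseteq> E \<and> card S = r \<and>
      (\<forall>e1\<in>S. \<forall>e2\<in>S. e1 \<noteq> e2 \<longrightarrow> card (e1 \<inter> e2) \<le> s)}"

definition KG_colorable :: "nat \<Rightarrow> 'a set set \<Rightarrow> nat \<Rightarrow> nat \<Rightarrow> bool" where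
  "KG_colorable r E s k \<longleftrightarrow> (\<exists>f. (\<forall>e\<in>E. f e < k) \<and>
      (\<forall>S\<in>KG_edges r E s. \<not> (\<exists>c. \<forall>e\<in>S. f e = c)))"

definition KG_chromatic :: "nat \<Rightarrow> 'a set set \<Rightarrow> nat \<Rightarrow> nat" where
  "KG_chromatic r E s = (LEAST k. KG_colorable r E s k)"

definition subseteq_s :: "'a set \<Rightarrow> nat \<Rightarrow> 'a set \<Rightarrow> bool" where
  "subseteq_s A s B \<longleftrightarrow> card (A - B) \<le> s"

(* X0 admits an equitable partition of V - X0 into r (possibly empty) parts
   X_0..X_{r-1} (given by the part-index map p) such that no hyperedge e
   satisfies e \<subseteq>_s X_i. *)
definition ecd_admissible :: "nat \<Rightarrow> 'a set \<Rightarrow> 'a set set \<Rightarrow> nat \<Rightarrow> 'a set \<Rightarrow> bool" where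
  "ecd_admissible r V E s X0 \<longleftrightarrow> X0 \<subseteq> V \<and>
     (\<exists>p :: 'a \<Rightarrow> nat. (\<forall>v\<in>V - X0. p v < r) \<and>
        (\<forall>i<r. \<forall>j<r. card {v\<in>V - X0. p v = i} \<le> card {v\<in>V - X0. p v = j} + 1) \<and>
        (\<forall>e\<in>E. \<forall>i<r. \<not> subseteq_s e s {v\<in>V - X0. p v = i}))"

definition ecd :: "nat \<Rightarrow> 'a set \<Rightarrow> 'a set set \<Rightarrow> nat \<Rightarrow> nat" where
  "ecd r V E s = (LEAST n. \<exists>X0. ecd_admissible r V E s X0 \<and> card X0 = n)"

end

theory Submission
  imports Defs
begin

lemma card_g: "card (insert (s+i) {..<s::nat}) = Suc s"
  by simp

lemma g_inj: "inj_on (\<lambda>i::nat. insert (s+i) {..<s::nat}) A"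
proof (rule inj_onI)
  fix x y assume "x \<in> A" "y \<in> A" and eq: "insert (s+x) {..<s} = insert (s+y) {..<s::nat}"
  have "s + x \<in> insert (s+y) {..<s}" using eq by blast
  then show "x = y" by auto
qed

lemma g_int: "i \<noteq> j \<Longrightarrow> insert (s+i) {..<s::nat} \<inter> insert (s+j) {..<s} = {..<s}"
  by auto

theorem theorem2:
  fixes l s :: nat
  assumes "l \<ge> 2" and "s \<ge> 1"
  shows "\<exists>(V :: nat set) E. hypergraph V E \<and> (\<forall>e\<in>E. s < card e) \<and>
           KG_chromatic 2 E s = l \<and> ecd 2 V E s = l + s"
proof -
  define g where "g = (\<lambda>i::nat. insert (s+i) {..<s::nat})"
  define V where "V = {..<l+s}"
  define E where "E = g ` {..<l}"
  have inj: "inj_on g {..<l}" unfolding g_def by (rule g_inj)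
  have cardE: "card E = l" unfolding E_def using inj by (simp add: card_image)
  have hyp: "hypergraph V E" unfolding hypergraph_def V_def E_def g_def by auto
  have sizes: "\<forall>e\<in>E. s < card e" unfolding E_def g_def by auto
  have edge2: "{g i, g j} \<in> KG_edges 2 E s" if "i < l" "j < l" "i \<noteq> j" for i j
  proof -
    have "g i \<noteq> g j" using inj that by (meson inj_onD lessThan_iff)
    moreover have "card (g i \<inter> g j) \<le> s" unfolding g_def using g_int[OF that(3)] by simp
    moreover have "card (g j \<inter> g i) \<le> s" unfolding g_def using g_int[of j i] that(3) by simp
    ultimately show ?thesis unfolding KG_edges_def E_def using that by auto
  qed
  have colL: "KG_colorable 2 E s l"
  proof -
    define f where "f = the_inv_into {..<l} g"
    have fg: "f (g i) = i" if "i < l" for i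
      unfolding f_def using the_inv_into_f_f[OF inj] that by simp
    show ?thesis unfolding KG_colorable_def
    proof (intro exI conjI ballI notI)
      fix e assume "e \<in> E" then show "f e < l" unfolding E_def using fg by auto
    next
      fix S assume S: "S \<in> KG_edges 2 E s" and "\<exists>c. \<forall>e\<in>S. f e = c"
      then obtain c where c: "\<forall>e\<in>S. f e = c" by blast
      from S have "card S = 2" "S \<subseteq> E" unfolding KG_edges_def by auto
      then obtain a b where ab: "S = {a,b}" "a \<noteq> b" by (meson card_2_iff)
      then have "a \<in> E" "b \<in> E" using \<open>S \<subseteq> E\<close> by auto
      then obtain i j where "i < l" "j < l" "a = g i" "b = g j" unfolding E_def by auto
      moreover have "f a = f b" using c ab by auto
      ultimately show False using fg ab by auto
    qed
  qed
  have notcol: "\<not> KG_colorable 2 E s k" if "k < l" for k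
  proof
    assume "KG_colorable 2 E s k"
    then obtain f where f: "\<forall>e\<in>E. f e < k" "\<forall>S\<in>KG_edges 2 E s. \<not> (\<exists>c. \<forall>e\<in>S. f e = c)"
      unfolding KG_colorable_def by blast
    have "card ((f \<circ> g) ` {..<l}) \<le> card {..<k}"
      by (rule card_mono) (use f(1) in \<open>auto simp: E_def\<close>)
    then have "\<not> inj_on (f \<circ> g) {..<l}" using that card_image by fastforce
    then obtain i j where ij: "i < l" "j < l" "i \<noteq> j" "f (g i) = f (g j)"
      unfolding inj_on_def by auto
    have "\<exists>c. \<forall>e\<in>{g i, g j}. f e = c" using ij(4) by auto
    then show False using f(2) edge2[OF ij(1-3)] by blast
  qed
  have chi: "KG_chromatic 2 E s = l"
    unfolding KG_chromatic_def
  proof (rule Least_equality)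
    show "KG_colorable 2 E s l" by (rule colL)
  next
    fix y assume "KG_colorable 2 E s y" then show "l \<le> y" using notcol by (meson not_le)
  qed
  have admV: "ecd_admissible 2 V E s V"
    unfolding ecd_admissible_def subseteq_s_def
    using sizes by (intro conjI exI[of _ "\<lambda>_. 0"]) auto
  have onlyV: "X0 = V" if adm: "ecd_admissible 2 V E s X0" for X0
  proof (rule ccontr)
    assume "X0 \<noteq> V"
    from adm obtain p :: "nat \<Rightarrow> nat" where sub: "X0 \<subseteq> V" and p: "\<forall>v\<in>V - X0. p v < 2"
       "\<forall>e\<in>E. \<forall>i<2. \<not> subseteq_s e s {v\<in>V - X0. p v = i}"
      unfolding ecd_admissible_def by blast
    then obtain v where v: "v \<in> V" "v \<notin> X0" using \<open>X0 \<noteq> V\<close> by blast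
    obtain e where e: "e \<in> E" "v \<in> e"
    proof (cases "v < s")
      case True
      have "g 0 \<in> E" using assms unfolding E_def by auto
      moreover have "v \<in> g 0" using True unfolding g_def by auto
      ultimately show ?thesis using that by blast
    next
      case False
      then have "v - s < l" "v = s + (v - s)" using v(1) unfolding V_def by auto
      then have "g (v - s) \<in> E" "v \<in> g (v - s)" unfolding E_def g_def by auto
      then show ?thesis using that by blast
    qed
    have ce: "card e = Suc s" using e(1) unfolding E_def g_def by auto
    have fe: "finite e" using e(1) unfolding E_def g_def by auto
    have "e - {w\<in>V - X0. p w = p v} \<subseteq> e - {v}" using v by auto
    then have "card (e - {w\<in>V - X0. p w = p v}) \<le> card (e - {v})"
      using fe by (simp add: card_mono)
    also have "\<dots> = s" using ce e(2) fe by simp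
    finally show False using p v e(1) unfolding subseteq_s_def by auto
  qed
  have ecdV: "ecd 2 V E s = l + s"
    unfolding ecd_def
  proof (rule Least_equality)
    show "\<exists>X0. ecd_admissible 2 V E s X0 \<and> card X0 = l + s"
      using admV by (intro exI[of _ V]) (simp add: V_def)
  next
    fix y assume "\<exists>X0. ecd_admissible 2 V E s X0 \<and> card X0 = y"
    then obtain X0 where "ecd_admissible 2 V E s X0" "card X0 = y" by blast
    moreover from this(1) have "X0 = V" by (rule onlyV)
    ultimately show "l + s \<le> y" by (simp add: V_def)
  qed
  show ?thesis using hyp sizes chi ecdV by blast
qed

end
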